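(* Let $K$ be a $p$-adic field and let $L$ be a totally ramified finite extension of $K$. Then the following are equivalent: (1) there exists a compatible system of angular component maps $(\mathrm{ac}_N)_{N\ge1}$ on $L$ whose restrictions to $K$ determine a compatible system of angular component maps on $K$ (i.e. $\mathrm{ac}_N(K)\subseteq\mathcal{O}_K/(N\mathcal{M}_K)\subseteq \mathcal{O}_L/(N\mathcal{M}_L)$ for all $N$); (2) there exists a uniformizer $\tau$ of $L$ such that $\tau^{[L:K]}\in K$.
   Context: A $p$-adic field is a finite extension of $\mathbb{Q}_p$. For a valued field $K$ with valuation ring $\mathcal{O}_K$ and maximal ideal $\mathcal{M}_K$ and $N\ge1$, let $R_N=\mathcal{O}_K/(N\mathcal{M}_K)$. An angular component map $\mathrm{ac}_N\colon K\to R_N$ is a multiplicative homomorphism $K^\times\to R_N^\times$ whose restriction to $\mathcal{O}_K^\times$ is the natural projection, extended by $\mathrm{ac}_N(0)=0$. A family $(\mathrm{ac}_N)_{N\ge1}$ is a compatible system if it commutes with the natural projections $R_{NM}\to R_N$ for all $N,M$. For $K\le L$ with $\mathcal{O}_K=K\cap\mathcal{O}_L$, one has $N\mathcal{M}_K=K\cap N\mathcal{M}_L$, so $\mathcal{O}_K/(N\mathcal{M}_K)$ is naturally a subring of $\mathcal{O}_L/(N\mathcal{M}_L)$. *)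

theory Defs
  imports Main
begin

text \<open>A field F is modelled as a subset of an ambient field type of characteristic 0;
  a valuation on it is an integer-valued map v (its value at 0 is irrelevant).\<close>

definition subfield :: "'a::field set \<Rightarrow> bool" where
  "subfield F \<longleftrightarrow> 0 \<in> F \<and> 1 \<in> F \<and>
     (\<forall>x\<in>F. \<forall>y\<in>F. x + y \<in> F \<and> x - y \<in> F \<and> x * y \<in> F) \<and>
     (\<forall>x\<in>F. x \<noteq> 0 \<longrightarrow> inverse x \<in> F)"

definition valuation_on :: "'a::field set \<Rightarrow> ('a \<Rightarrow> int) \<Rightarrow> bool" where
  "valuation_on F v \<longleftrightarrow>
     (\<forall>x\<in>F. \<forall>y\<in>F. x \<noteq> 0 \<longrightarrow> y \<noteq> 0 \<longrightarrow> v (x * y) = v x + v y) \<and>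
     (\<forall>x\<in>F. \<forall>y\<in>F. x \<noteq> 0 \<longrightarrow> y \<noteq> 0 \<longrightarrow> x + y \<noteq> 0 \<longrightarrow> min (v x) (v y) \<le> v (x + y)) \<and>
     (\<exists>x\<in>F. x \<noteq> 0 \<and> v x \<noteq> 0)"

definition valring :: "'a::field set \<Rightarrow> ('a \<Rightarrow> int) \<Rightarrow> 'a set" where
  "valring F v = {x\<in>F. x = 0 \<or> 0 \<le> v x}"

definition maxid :: "'a::field set \<Rightarrow> ('a \<Rightarrow> int) \<Rightarrow> 'a set" where
  "maxid F v = {x\<in>F. x = 0 \<or> 0 < v x}"

definition unitsO :: "'a::field set \<Rightarrow> ('a \<Rightarrow> int) \<Rightarrow> 'a set" where
  "unitsO F v = {x\<in>F. x \<noteq> 0 \<and> v x = 0}"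

definition complete_wrt :: "'a::field set \<Rightarrow> ('a \<Rightarrow> int) \<Rightarrow> bool" where
  "complete_wrt F v \<longleftrightarrow>
     (\<forall>X::nat \<Rightarrow> 'a. (\<forall>i. X i \<in> F) \<and>
        (\<forall>n::int. \<exists>M. \<forall>i\<ge>M. \<forall>j\<ge>M. X i = X j \<or> n \<le> v (X i - X j)) \<longrightarrow>
        (\<exists>l\<in>F. \<forall>n::int. \<exists>M. \<forall>i\<ge>M. X i = l \<or> n \<le> v (X i - l)))"

definition finite_residue :: "'a::field set \<Rightarrow> ('a \<Rightarrow> int) \<Rightarrow> bool" where
  "finite_residue F v \<longleftrightarrow>
     finite (valring F v // {(x, y). x \<in> valring F v \<and> y \<in> valring F v \<and> x - y \<in> maxid F v})"

text \<open>p-adic field: a complete discretely valued field of characteristic 0 with finite residue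
  field (equivalently, a finite extension of Q_p); characteristic 0 comes from the type class.\<close>
definition padic_field :: "'a::field_char_0 set \<Rightarrow> ('a \<Rightarrow> int) \<Rightarrow> bool" where
  "padic_field F v \<longleftrightarrow> subfield F \<and> valuation_on F v \<and> complete_wrt F v \<and> finite_residue F v"

definition uniformizer :: "'a::field set \<Rightarrow> ('a \<Rightarrow> int) \<Rightarrow> 'a \<Rightarrow> bool" where
  "uniformizer F v t \<longleftrightarrow> t \<in> F \<and> t \<noteq> 0 \<and> 0 < v t \<and>
     (\<forall>x\<in>F. x \<noteq> 0 \<longrightarrow> 0 < v x \<longrightarrow> v t \<le> v x)"

definition K_span :: "'a::field set \<Rightarrow> 'a set \<Rightarrow> 'a set" where
  "K_span K B = {x. \<exists>c. (\<forall>b\<in>B. c b \<in> K) \<and> x = (\<Sum>b\<in>B. c b * b)}"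

definition K_indep :: "'a::field set \<Rightarrow> 'a set \<Rightarrow> bool" where
  "K_indep K B \<longleftrightarrow> (\<forall>c. (\<forall>b\<in>B. c b \<in> K) \<and> (\<Sum>b\<in>B. c b * b) = 0 \<longrightarrow> (\<forall>b\<in>B. c b = 0))"

definition K_basis :: "'a::field set \<Rightarrow> 'a set \<Rightarrow> 'a set \<Rightarrow> bool" where
  "K_basis K L B \<longleftrightarrow> finite B \<and> B \<subseteq> L \<and> K_indep K B \<and> K_span K B = L"

definition finite_ext :: "'a::field set \<Rightarrow> 'a set \<Rightarrow> bool" where
  "finite_ext K L \<longleftrightarrow> (\<exists>B. K_basis K L B)"

definition degree :: "'a::field set \<Rightarrow> 'a set \<Rightarrow> nat" where
  "degree K L = card (SOME B. K_basis K L B)"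

text \<open>Totally ramified: ramification index e(L/K) equals [L:K].\<close>
definition totally_ramified :: "'a::field set \<Rightarrow> 'a set \<Rightarrow> ('a \<Rightarrow> int) \<Rightarrow> bool" where
  "totally_ramified K L v \<longleftrightarrow>
     (\<forall>s t. uniformizer K v s \<and> uniformizer L v t \<longrightarrow> v s = int (degree K L) * v t)"

text \<open>R_N = O_F/(N M_F); elements are cosets (sets), proj F v N x is the class of x.\<close>
definition NM :: "'a::field set \<Rightarrow> ('a \<Rightarrow> int) \<Rightarrow> nat \<Rightarrow> 'a set" where
  "NM F v N = (\<lambda>x. of_nat N * x) ` maxid F v"

definition proj :: "'a::field set \<Rightarrow> ('a \<Rightarrow> int) \<Rightarrow> nat \<Rightarrow> 'a \<Rightarrow> 'a set" where
  "proj F v N x = {y \<in> valring F v. x - y \<in> NM F v N}"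

definition ac_map :: "'a::field set \<Rightarrow> ('a \<Rightarrow> int) \<Rightarrow> nat \<Rightarrow> ('a \<Rightarrow> 'a set) \<Rightarrow> bool" where
  "ac_map F v N ac \<longleftrightarrow>
     ac 0 = proj F v N 0 \<and>
     (\<forall>x\<in>F. x \<noteq> 0 \<longrightarrow> (\<exists>a\<in>valring F v. ac x = proj F v N a \<and>
          (\<exists>b\<in>valring F v. proj F v N (a * b) = proj F v N 1))) \<and>
     (\<forall>x\<in>F. \<forall>y\<in>F. \<forall>a\<in>valring F v. \<forall>b\<in>valring F v. x \<noteq> 0 \<longrightarrow> y \<noteq> 0 \<longrightarrow>
          ac x = proj F v N a \<longrightarrow> ac y = proj F v N b \<longrightarrow> ac (x * y) = proj F v N (a * b)) \<and>
     (\<forall>u\<in>unitsO F v. ac u = proj F v N u)"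

definition compatible_ac :: "'a::field set \<Rightarrow> ('a \<Rightarrow> int) \<Rightarrow> (nat \<Rightarrow> 'a \<Rightarrow> 'a set) \<Rightarrow> bool" where
  "compatible_ac F v ac \<longleftrightarrow>
     (\<forall>N\<ge>1. ac_map F v N (ac N)) \<and>
     (\<forall>N\<ge>1. \<forall>M\<ge>1. \<forall>x\<in>F. \<forall>a\<in>valring F v.
        ac (N * M) x = proj F v (N * M) a \<longrightarrow> ac N x = proj F v N a)"

end

theory Submission
  imports Defs
begin


locale vfield =
  fixes F :: "'a::field_char_0 set" and v :: "'a \<Rightarrow> int"
  assumes sf: "subfield F" and val: "valuation_on F v"
begin

lemma zero_in[simp]: "0 \<in> F" and one_in[simp]: "1 \<in> F"
  using sf by (auto simp: subfield_def)

lemma add_in[simp]: "x \<in> F \<Longrightarrow> y \<in> F \<Longrightarrow> x + y \<in> F"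
  and diff_in[simp]: "x \<in> F \<Longrightarrow> y \<in> F \<Longrightarrow> x - y \<in> F"
  and mult_in[simp]: "x \<in> F \<Longrightarrow> y \<in> F \<Longrightarrow> x * y \<in> F"
  using sf by (auto simp: subfield_def)

lemma inv_in[simp]: "x \<in> F \<Longrightarrow> inverse x \<in> F"
  using sf by (cases "x = 0") (auto simp: subfield_def)

lemma divide_in[simp]: "x \<in> F \<Longrightarrow> y \<in> F \<Longrightarrow> x / y \<in> F"
  by (simp add: divide_inverse)

lemma minus_in[simp]: "x \<in> F \<Longrightarrow> - x \<in> F"
  using diff_in[of 0 x] by simp

lemma power_in[simp]: "x \<in> F \<Longrightarrow> x ^ n \<in> F"
  by (induction n) auto

lemma powi_in[simp]: "x \<in> F \<Longrightarrow> x powi k \<in> F"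
  by (simp add: power_int_def)

lemma of_nat_in[simp]: "of_nat n \<in> F"
  by (induction n) auto

lemma v_mult: "x \<in> F \<Longrightarrow> y \<in> F \<Longrightarrow> x \<noteq> 0 \<Longrightarrow> y \<noteq> 0 \<Longrightarrow> v (x * y) = v x + v y"
  using val by (auto simp: valuation_on_def)

lemma v_add: "x \<in> F \<Longrightarrow> y \<in> F \<Longrightarrow> x \<noteq> 0 \<Longrightarrow> y \<noteq> 0 \<Longrightarrow> x + y \<noteq> 0 \<Longrightarrow> min (v x) (v y) \<le> v (x + y)"
  using val by (auto simp: valuation_on_def)

lemma v_one[simp]: "v 1 = 0"
  using v_mult[of 1 1] by simp

lemma v_inverse: "x \<in> F \<Longrightarrow> x \<noteq> 0 \<Longrightarrow> v (inverse x) = - v x"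
  using v_mult[of x "inverse x"] by simp

lemma v_divide: "x \<in> F \<Longrightarrow> y \<in> F \<Longrightarrow> x \<noteq> 0 \<Longrightarrow> y \<noteq> 0 \<Longrightarrow> v (x / y) = v x - v y"
  using v_mult[of x "inverse y"] v_inverse[of y] by (simp add: divide_inverse)

lemma v_minus1[simp]: "v (-1) = 0"
  using v_mult[of "-1" "-1"] by simp

lemma v_uminus[simp]: "x \<in> F \<Longrightarrow> v (- x) = v x"
proof (cases "x = 0")
  case False
  assume "x \<in> F"
  then show ?thesis using v_mult[of "-1" x] False by simp
qed simp

lemma v_power: "x \<in> F \<Longrightarrow> x \<noteq> 0 \<Longrightarrow> v (x ^ n) = int n * v x"
  by (induction n) (auto simp: v_mult algebra_simps)

lemma v_powi: "x \<in> F \<Longrightarrow> x \<noteq> 0 \<Longrightarrow> v (x powi k) = k * v x"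
  by (auto simp: power_int_def v_power v_inverse power_inverse[symmetric])

lemma v_nat_nonneg: "n \<ge> 1 \<Longrightarrow> 0 \<le> v (of_nat n)"
proof (induction n)
  case (Suc n)
  show ?case
  proof (cases "n = 0")
    case False
    have "(of_nat n :: 'a) \<noteq> 0" "(of_nat n + 1 :: 'a) \<noteq> 0" using False
      by (auto, metis of_nat_Suc of_nat_eq_0_iff nat.simps(3) add.commute)
    then have "min (v (of_nat n)) (v 1) \<le> v (of_nat n + 1)"
      using v_add[of "of_nat n" 1] by simp
    then have "0 \<le> v (of_nat n + 1)" using Suc False by simp
    then show ?thesis by (metis of_nat_Suc add.commute)
  qed simp
qed simp

lemma v_nat_mult: "N \<ge> 1 \<Longrightarrow> M \<ge> 1 \<Longrightarrow> v (of_nat (N * M)) = v (of_nat N) + v (of_nat M)"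
  using v_mult[of "of_nat N" "of_nat M"] by simp

definition sm :: "int \<Rightarrow> 'a \<Rightarrow> bool" where
  "sm n x \<longleftrightarrow> x \<in> F \<and> (x = 0 \<or> n < v x)"

lemma sm_zero[simp]: "sm n 0" by (simp add: sm_def)

lemma sm_add: "sm n x \<Longrightarrow> sm n y \<Longrightarrow> sm n (x + y)"
proof -
  assume a: "sm n x" "sm n y"
  show ?thesis
  proof (cases "x = 0 \<or> y = 0 \<or> x + y = 0")
    case True then show ?thesis using a by (auto simp: sm_def)
  next
    case False
    then have "min (v x) (v y) \<le> v (x + y)" using a v_add[of x y] by (auto simp: sm_def)
    then show ?thesis using a False by (auto simp: sm_def)
  qed
qed

lemma sm_uminus: "sm n x \<Longrightarrow> sm n (- x)"
  by (auto simp: sm_def)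

lemma sm_diff: "sm n x \<Longrightarrow> sm n y \<Longrightarrow> sm n (x - y)"
  using sm_add[of n x "- y"] sm_uminus[of n y] by simp

lemma sm_swap: "sm n (x - y) \<Longrightarrow> sm n (y - x)"
  using sm_uminus[of n "x - y"] by simp

lemma sm_mono: "m \<le> n \<Longrightarrow> sm n x \<Longrightarrow> sm m x"
  by (auto simp: sm_def)

lemma valring_sm: "x \<in> valring F v \<longleftrightarrow> sm (-1) x"
  by (auto simp: sm_def valring_def)

lemma maxid_sm: "x \<in> maxid F v \<longleftrightarrow> sm 0 x"
  by (auto simp: sm_def maxid_def)

lemma valring_F: "x \<in> valring F v \<Longrightarrow> x \<in> F"
  by (simp add: valring_def)

lemma sm_mult: "r \<in> valring F v \<Longrightarrow> sm n x \<Longrightarrow> sm n (r * x)"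
proof -
  assume r: "r \<in> valring F v" and x: "sm n x"
  show ?thesis
  proof (cases "r = 0 \<or> x = 0")
    case False
    then have "v (r * x) = v r + v x" using r x v_mult[of r x] by (auto simp: sm_def valring_def)
    then show ?thesis using r x False by (auto simp: sm_def valring_def)
  qed (use r x in \<open>auto simp: sm_def valring_def\<close>)
qed

lemma valring_mult[simp]: "a \<in> valring F v \<Longrightarrow> b \<in> valring F v \<Longrightarrow> a * b \<in> valring F v"
  using sm_mult[of a "-1" b] by (simp add: valring_sm)

lemma valring_add[simp]: "a \<in> valring F v \<Longrightarrow> b \<in> valring F v \<Longrightarrow> a + b \<in> valring F v"
  using sm_add[of "-1" a b] by (simp add: valring_sm)

lemma valring_diff[simp]: "a \<in> valring F v \<Longrightarrow> b \<in> valring F v \<Longrightarrow> a - b \<in> valring F v"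
  using sm_diff[of "-1" a b] by (simp add: valring_sm)

lemma valring_one[simp]: "1 \<in> valring F v" and valring_zero[simp]: "0 \<in> valring F v"
  by (auto simp: valring_def)

lemma valring_power[simp]: "a \<in> valring F v \<Longrightarrow> a ^ n \<in> valring F v"
  by (induction n) auto

lemma NM_iff: "N \<ge> 1 \<Longrightarrow> x \<in> NM F v N \<longleftrightarrow> sm (v (of_nat N)) x"
proof
  assume N: "N \<ge> 1"
  have N0: "(of_nat N :: 'a) \<noteq> 0" using N by simp
  {
    assume "x \<in> NM F v N"
    then obtain m where m: "m \<in> maxid F v" "x = of_nat N * m" by (auto simp: NM_def)
    show "sm (v (of_nat N)) x"
    proof (cases "m = 0")
      case False
      then have "v x = v (of_nat N) + v m" using m N0 v_mult[of "of_nat N" m] by (auto simp: maxid_def)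
      then show ?thesis using m False by (auto simp: sm_def maxid_def)
    qed (use m in auto)
  }
  {
    assume s: "sm (v (of_nat N)) x"
    define m where "m = x / of_nat N"
    have xm: "x = of_nat N * m" using N0 by (simp add: m_def)
    have "m \<in> maxid F v"
    proof (cases "x = 0")
      case False
      then have "v m = v x - v (of_nat N)" using s N0 v_divide[of x "of_nat N"] by (auto simp: m_def sm_def)
      then show ?thesis using s False N0 by (auto simp: maxid_def m_def sm_def)
    qed (auto simp: m_def maxid_def)
    then show "x \<in> NM F v N" using xm by (auto simp: NM_def)
  }
qed

lemma proj_eq: "N \<ge> 1 \<Longrightarrow> a \<in> valring F v \<Longrightarrow> b \<in> valring F v \<Longrightarrow>
   proj F v N a = proj F v N b \<longleftrightarrow> sm (v (of_nat N)) (a - b)"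
proof
  assume N: "N \<ge> 1" and a: "a \<in> valring F v" and b: "b \<in> valring F v"
  {
    assume "proj F v N a = proj F v N b"
    moreover have "a \<in> proj F v N a" using a N by (simp add: proj_def NM_iff)
    ultimately have "a \<in> proj F v N b" by simp
    then show "sm (v (of_nat N)) (a - b)" using N by (auto simp: proj_def NM_iff intro: sm_swap)
  }
  {
    assume s: "sm (v (of_nat N)) (a - b)"
    show "proj F v N a = proj F v N b"
    proof (rule set_eqI)
      fix y
      have 1: "a - y = (a - b) + (b - y)" "b - y = (a - y) - (a - b)" by simp_all
      have "sm (v (of_nat N)) (a - y) \<longleftrightarrow> sm (v (of_nat N)) (b - y)"
      proof
        assume "sm (v (of_nat N)) (a - y)"
        then show "sm (v (of_nat N)) (b - y)" using sm_diff[OF _ s] 1(2) by metis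
      next
        assume "sm (v (of_nat N)) (b - y)"
        then show "sm (v (of_nat N)) (a - y)" using sm_add[OF s] 1(1) by metis
      qed
      then show "y \<in> proj F v N a \<longleftrightarrow> y \<in> proj F v N b"
        unfolding proj_def using N by (simp add: NM_iff)
    qed
  }
qed

lemma exists_unif: "\<exists>t. uniformizer F v t"
proof -
  obtain x where x: "x \<in> F" "x \<noteq> 0" "v x \<noteq> 0" using val by (auto simp: valuation_on_def)
  obtain y where y: "y \<in> F" "y \<noteq> 0" "v y > 0"
  proof (cases "v x > 0")
    case True then show ?thesis using x that by blast
  next
    case False
    then show ?thesis using x that[of "inverse x"] v_inverse[of x] by auto
  qed
  define P where "P n \<longleftrightarrow> (\<exists>z\<in>F. z \<noteq> 0 \<and> v z = int n \<and> n > 0)" for n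
  have "P (nat (v y))" using y by (auto simp: P_def)
  then have "P (LEAST n. P n)" by (rule LeastI)
  then obtain z where z: "z \<in> F" "z \<noteq> 0" "v z = int (LEAST n. P n)" "(LEAST n. P n) > 0"
    by (auto simp: P_def)
  have "v z \<le> v w" if "w \<in> F" "w \<noteq> 0" "0 < v w" for w
  proof -
    have "P (nat (v w))" using that by (auto simp: P_def)
    then have "(LEAST n. P n) \<le> nat (v w)" by (rule Least_le)
    then show ?thesis using z that by linarith
  qed
  then show ?thesis using z by (auto simp: uniformizer_def)
qed

lemma unif_dvd: "uniformizer F v t \<Longrightarrow> x \<in> F \<Longrightarrow> x \<noteq> 0 \<Longrightarrow> v t dvd v x"
proof -
  assume t: "uniformizer F v t" and x: "x \<in> F" "x \<noteq> 0"
  define k where "k = v x div v t"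
  define w where "w = x / t powi k"
  have t0: "t \<in> F" "t \<noteq> 0" "v t > 0" using t by (auto simp: uniformizer_def)
  have w: "w \<in> F" "w \<noteq> 0" using x t0 by (auto simp: w_def)
  have "v w = v x - k * v t" using x t0 v_divide[of x "t powi k"] v_powi[of t k] by (simp add: w_def)
  also have "\<dots> = v x mod v t" by (simp add: k_def minus_div_mult_eq_mod)
  finally have vw: "v w = v x mod v t" .
  have "v x mod v t = 0"
  proof (rule ccontr)
    assume "v x mod v t \<noteq> 0"
    then have "v x mod v t > 0" using t0 pos_mod_sign[of "v t" "v x"] by linarith
    then have "v t \<le> v w" using t w vw by (auto simp: uniformizer_def)
    moreover have "v x mod v t < v t" using t0 by simp
    ultimately show False using vw by linarith
  qed
  then show ?thesis by (simp add: dvd_eq_mod_eq_0)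
qed

lemma sm_all_zero: "(\<And>k::nat. sm (int k) x) \<Longrightarrow> x = 0"
proof (rule ccontr)
  assume a: "\<And>k::nat. sm (int k) x" and x: "x \<noteq> 0"
  from a[of "nat (v x)"] x show False by (auto simp: sm_def split: if_splits)
qed

lemma sm_power: "a \<in> valring F v \<Longrightarrow> b \<in> valring F v \<Longrightarrow> sm n (a - b) \<Longrightarrow> sm n (a ^ m - b ^ m)"
proof (induction m)
  case (Suc m)
  have "a ^ Suc m - b ^ Suc m = a * (a ^ m - b ^ m) + b ^ m * (a - b)" by (simp add: algebra_simps)
  then show ?case using Suc sm_add sm_mult by simp
qed (simp)

lemma sm_unit: "sm 0 (x - 1) \<Longrightarrow> x \<noteq> 0 \<and> v x = 0"
proof -
  assume s: "sm 0 (x - 1)"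
  have "x = (x - 1) + 1" by simp
  then have xF: "x \<in> F" using s by (metis add_in one_in sm_def)
  show ?thesis
  proof (cases "x = 1")
    case False
    have x0: "x \<noteq> 0" using s by (auto simp: sm_def)
    have p: "v (x - 1) > 0" using s False by (auto simp: sm_def)
    have "min (v (x - 1)) (v 1) \<le> v ((x - 1) + 1)" using v_add[of "x - 1" 1] xF x0 False by simp
    then have g: "v x \<ge> 0" using p by simp
    have "min (v x) (v (-(x - 1))) \<le> v (x + (-(x - 1)))" using v_add[of x "-(x-1)"] xF x0 False by simp
    moreover have "v (1 - x) = v (x - 1)" using v_uminus[of "x - 1"] xF by simp
    ultimately have "min (v x) (v (x - 1)) \<le> 0" using xF by simp
    then show ?thesis using g p x0 by linarith
  qed simp
qed

lemma complete_lim: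
  assumes c: "complete_wrt F v" and X: "\<And>k. X k \<in> F"
    and C: "\<And>k l. k \<le> l \<Longrightarrow> sm (int k) (X k - X l)"
  shows "\<exists>a\<in>F. \<forall>k. sm (int k) (X k - a)"
proof -
  have S: "sm (int (min i j)) (X i - X j)" for i j
  proof (cases "i \<le> j")
    case True then show ?thesis using C by (simp add: min_def)
  next
    case False then show ?thesis using C[of j i] sm_swap by (simp add: min_def)
  qed
  have "\<forall>n::int. \<exists>M. \<forall>i\<ge>M. \<forall>j\<ge>M. X i = X j \<or> n \<le> v (X i - X j)"
  proof
    fix n :: int
    show "\<exists>M. \<forall>i\<ge>M. \<forall>j\<ge>M. X i = X j \<or> n \<le> v (X i - X j)"
    proof (intro exI allI impI)
      fix i j assume "nat n \<le> i" "nat n \<le> j"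
      then show "X i = X j \<or> n \<le> v (X i - X j)" using S[of i j] by (auto simp: sm_def)
    qed
  qed
  then obtain a where a: "a \<in> F" "\<forall>n::int. \<exists>M. \<forall>i\<ge>M. X i = a \<or> n \<le> v (X i - a)"
    using c X unfolding complete_wrt_def by blast
  have "sm (int k) (X k - a)" for k
  proof -
    obtain M where M: "\<forall>i\<ge>M. X i = a \<or> int k + 1 \<le> v (X i - a)" using a by blast
    define i where "i = max M k"
    have "X i = a \<or> int k + 1 \<le> v (X i - a)" using M by (simp add: i_def)
    then have 1: "sm (int k) (X i - a)" using X a by (auto simp: sm_def)
    have 2: "sm (int k) (X k - X i)" using C by (simp add: i_def)
    show ?thesis using sm_add[OF 2 1] by simp
  qed
  then show ?thesis using a by blast
qed

end


context vfield
begin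

lemma ac_mult: "ac_map F v N ac \<Longrightarrow> x \<in> F \<Longrightarrow> y \<in> F \<Longrightarrow> x \<noteq> 0 \<Longrightarrow> y \<noteq> 0 \<Longrightarrow>
   a \<in> valring F v \<Longrightarrow> b \<in> valring F v \<Longrightarrow> ac x = proj F v N a \<Longrightarrow> ac y = proj F v N b \<Longrightarrow>
   ac (x * y) = proj F v N (a * b)"
  unfolding ac_map_def by blast

lemma ac_nonzero: "ac_map F v N ac \<Longrightarrow> x \<in> F \<Longrightarrow> x \<noteq> 0 \<Longrightarrow>
   \<exists>a\<in>valring F v. ac x = proj F v N a \<and> (\<exists>b\<in>valring F v. proj F v N (a * b) = proj F v N 1)"
  unfolding ac_map_def by blast

lemma one_unitsO[simp]: "1 \<in> unitsO F v"
  by (simp add: unitsO_def)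

lemma unitsO_valring: "u \<in> unitsO F v \<Longrightarrow> u \<in> valring F v"
  by (simp add: unitsO_def valring_def)

lemma ac_unit: "ac_map F v N ac \<Longrightarrow> u \<in> unitsO F v \<Longrightarrow> ac u = proj F v N u"
  unfolding ac_map_def by blast

lemma ac_pow: "ac_map F v N ac \<Longrightarrow> x \<in> F \<Longrightarrow> x \<noteq> 0 \<Longrightarrow> a \<in> valring F v \<Longrightarrow>
   ac x = proj F v N a \<Longrightarrow> ac (x ^ n) = proj F v N (a ^ n)"
proof (induction n)
  case 0
  then show ?case using ac_unit[of N ac 1] by simp
next
  case (Suc n)
  then show ?case using ac_mult[of N ac x "x ^ n" a "a ^ n"] by simp
qed

definition wq :: "'a \<Rightarrow> 'a \<Rightarrow> 'a" where
  "wq t x = x / t powi (v x div v t)"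

definition acq :: "'a \<Rightarrow> nat \<Rightarrow> 'a \<Rightarrow> 'a set" where
  "acq t N x = proj F v N (if x = 0 then 0 else wq t x)"

lemma wq_unit: "uniformizer F v t \<Longrightarrow> x \<in> F \<Longrightarrow> x \<noteq> 0 \<Longrightarrow> wq t x \<in> unitsO F v"
proof -
  assume t: "uniformizer F v t" and x: "x \<in> F" "x \<noteq> 0"
  have t0: "t \<in> F" "t \<noteq> 0" "v t > 0" using t by (auto simp: uniformizer_def)
  have d: "v t dvd v x" using unif_dvd[OF t x] .
  have "v (wq t x) = v x - (v x div v t) * v t"
    using x t0 v_divide[of x "t powi (v x div v t)"] v_powi[of t "v x div v t"] by (simp add: wq_def)
  also have "\<dots> = 0" using d by simp
  finally show ?thesis using x t0 by (simp add: unitsO_def wq_def)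
qed

lemma wq_mult: "uniformizer F v t \<Longrightarrow> x \<in> F \<Longrightarrow> y \<in> F \<Longrightarrow> x \<noteq> 0 \<Longrightarrow> y \<noteq> 0 \<Longrightarrow>
  wq t (x * y) = wq t x * wq t y"
proof -
  assume t: "uniformizer F v t" and x: "x \<in> F" "x \<noteq> 0" and y: "y \<in> F" "y \<noteq> 0"
  have t0: "t \<in> F" "t \<noteq> 0" "v t > 0" using t by (auto simp: uniformizer_def)
  have d: "v t dvd v x" using unif_dvd[OF t x] .
  have "v (x * y) div v t = v x div v t + v y div v t"
    using v_mult[of x y] x y div_plus_div_distrib_dvd_left[OF d] by simp
  then have "t powi (v (x * y) div v t) = t powi (v x div v t) * t powi (v y div v t)"
    using t0 by (simp add: power_int_add)
  then show ?thesis by (simp add: wq_def)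
qed

lemma wq_unitsO: "u \<in> unitsO F v \<Longrightarrow> wq t u = u"
  by (simp add: unitsO_def wq_def)

lemma acq_map: "uniformizer F v t \<Longrightarrow> N \<ge> 1 \<Longrightarrow> ac_map F v N (acq t N)"
proof -
  assume t: "uniformizer F v t" and N: "N \<ge> 1"
  have A: "acq t N 0 = proj F v N 0" by (simp add: acq_def)
  have B: "\<forall>x\<in>F. x \<noteq> 0 \<longrightarrow> (\<exists>a\<in>valring F v. acq t N x = proj F v N a \<and>
          (\<exists>b\<in>valring F v. proj F v N (a * b) = proj F v N 1))"
  proof (intro ballI impI)
    fix x assume x: "x \<in> F" "x \<noteq> 0"
    have w: "wq t x \<in> unitsO F v" using wq_unit[OF t x] .
    then have "inverse (wq t x) \<in> valring F v"
      using v_inverse[of "wq t x"] by (simp add: unitsO_def valring_def)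
    moreover have "wq t x * inverse (wq t x) = 1" using w by (simp add: unitsO_def)
    ultimately show "\<exists>a\<in>valring F v. acq t N x = proj F v N a \<and>
          (\<exists>b\<in>valring F v. proj F v N (a * b) = proj F v N 1)"
      using w x unitsO_valring by (metis acq_def)
  qed
  have C: "\<forall>x\<in>F. \<forall>y\<in>F. \<forall>a\<in>valring F v. \<forall>b\<in>valring F v. x \<noteq> 0 \<longrightarrow> y \<noteq> 0 \<longrightarrow>
          acq t N x = proj F v N a \<longrightarrow> acq t N y = proj F v N b \<longrightarrow> acq t N (x * y) = proj F v N (a * b)"
  proof (intro ballI impI)
    fix x y a b
    assume x: "x \<in> F" and y: "y \<in> F" and a: "a \<in> valring F v" and b: "b \<in> valring F v"
      and x0: "x \<noteq> 0" and y0: "y \<noteq> 0"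
      and ha: "acq t N x = proj F v N a" and hb: "acq t N y = proj F v N b"
    have wx: "wq t x \<in> valring F v" and wy: "wq t y \<in> valring F v"
      using wq_unit[OF t] unitsO_valring x y x0 y0 by auto
    have sa: "sm (v (of_nat N)) (wq t x - a)" using ha proj_eq[OF N wx a] x0 by (simp add: acq_def)
    have sb: "sm (v (of_nat N)) (wq t y - b)" using hb proj_eq[OF N wy b] y0 by (simp add: acq_def)
    have "wq t x * wq t y - a * b = wq t x * (wq t y - b) + b * (wq t x - a)" by (simp add: algebra_simps)
    then have "sm (v (of_nat N)) (wq t x * wq t y - a * b)"
      using sm_add[OF sm_mult[OF wx sb] sm_mult[OF b sa]] by simp
    then have "proj F v N (wq t x * wq t y) = proj F v N (a * b)"
      using proj_eq[OF N] wx wy a b by simp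
    then show "acq t N (x * y) = proj F v N (a * b)"
      using wq_mult[OF t x y x0 y0] x0 y0 by (simp add: acq_def)
  qed
  have D: "\<forall>u\<in>unitsO F v. acq t N u = proj F v N u"
    by (auto simp: acq_def wq_unitsO)
  show ?thesis unfolding ac_map_def using A B C D by blast
qed

lemma acq_compat: "uniformizer F v t \<Longrightarrow> compatible_ac F v (acq t)"
proof -
  assume t: "uniformizer F v t"
  have "\<forall>N\<ge>1. \<forall>M\<ge>1. \<forall>x\<in>F. \<forall>a\<in>valring F v.
        acq t (N * M) x = proj F v (N * M) a \<longrightarrow> acq t N x = proj F v N a"
  proof (intro allI impI ballI)
    fix N M :: nat and x a
    assume N: "N \<ge> 1" and M: "M \<ge> 1" and x: "x \<in> F" and a: "a \<in> valring F v"
      and h: "acq t (N * M) x = proj F v (N * M) a"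
    define r where "r = (if x = 0 then 0 else wq t x)"
    have r: "r \<in> valring F v" using wq_unit[OF t x] unitsO_valring by (auto simp: r_def)
    have NM1: "N * M \<ge> 1" using N M by simp
    have "sm (v (of_nat (N * M))) (r - a)" using h proj_eq[OF NM1 r a] by (simp add: acq_def r_def)
    moreover have "v (of_nat N) \<le> v (of_nat (N * M))" using v_nat_mult[OF N M] v_nat_nonneg[OF M] by simp
    ultimately have "sm (v (of_nat N)) (r - a)" using sm_mono by blast
    then show "acq t N x = proj F v N a" using proj_eq[OF N r a] by (simp add: acq_def r_def)
  qed
  then show ?thesis unfolding compatible_ac_def using acq_map[OF t] by blast
qed

lemma exists_q: "finite_residue F v \<Longrightarrow> \<exists>q::nat. q \<ge> 1 \<and> 0 < v (of_nat q)"
proof -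
  assume fr: "finite_residue F v"
  define R where "R = {(x, y). x \<in> valring F v \<and> y \<in> valring F v \<and> x - y \<in> maxid F v}"
  define f where "f i = R `` {of_nat i :: 'a}" for i :: nat
  have ofv: "(of_nat i :: 'a) \<in> valring F v" for i
    using v_nat_nonneg[of i] by (cases "i = 0") (auto simp: valring_def)
  have "range f \<subseteq> valring F v // R" using ofv by (auto simp: f_def intro: quotientI)
  moreover have "finite (valring F v // R)" using fr by (simp add: finite_residue_def R_def)
  ultimately have fin: "finite (range f)" by (rule finite_subset)
  have "\<not> inj f"
  proof
    assume "inj f"
    then have "finite (UNIV :: nat set)" using fin finite_imageD by blast
    then show False by simp
  qed
  then obtain i j where ij: "i \<noteq> j" "f i = f j" by (auto simp: inj_def)
  have "(of_nat i :: 'a) \<in> f i" using ofv by (simp add: f_def R_def maxid_def)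
  then have "(of_nat i :: 'a) \<in> f j" using ij by simp
  then have "(of_nat j :: 'a) - of_nat i \<in> maxid F v" by (simp add: f_def R_def)
  then have s: "sm 0 ((of_nat j :: 'a) - of_nat i)" by (simp add: maxid_sm)
  show ?thesis
  proof (cases "i < j")
    case True
    then have "(of_nat j :: 'a) - of_nat i = of_nat (j - i)" by (simp add: of_nat_diff)
    then show ?thesis using s True by (intro exI[of _ "j - i"]) (auto simp: sm_def)
  next
    case False
    then have "(of_nat j :: 'a) - of_nat i = - of_nat (i - j)" using ij by (simp add: of_nat_diff)
    then have "sm 0 (- (- of_nat (i - j)) :: 'a)" using s sm_uminus by metis
    then have "sm 0 (of_nat (i - j) :: 'a)" by simp
    then show ?thesis using False ij by (intro exI[of _ "i - j"]) (auto simp: sm_def)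
  qed
qed

end



lemma padic_vfield: "padic_field F v \<Longrightarrow> vfield F v"
  by (simp add: padic_field_def vfield_def)

lemma dir2:
  fixes K L :: "'a::field_char_0 set" and v :: "'a \<Rightarrow> int"
  assumes pK: "padic_field K v" and pL: "padic_field L v" and KL: "K \<subseteq> L"
    and tr: "totally_ramified K L v" and t: "uniformizer L v t" and te: "t ^ degree K L \<in> K"
  shows "\<exists>ac. compatible_ac L v ac \<and>
            (\<forall>N\<ge>1. \<forall>x\<in>K. \<exists>a\<in>valring K v. ac N x = proj L v N a)"
proof -
  interpret K: vfield K v using padic_vfield[OF pK] .
  interpret L: vfield L v using padic_vfield[OF pL] .
  obtain s where s: "uniformizer K v s" using K.exists_unif by blast
  define e where "e = degree K L"
  have vs: "v s = int e * v t" using tr s t by (simp add: totally_ramified_def e_def)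
  have t0: "t \<in> L" "t \<noteq> 0" "v t > 0" using t by (auto simp: uniformizer_def)
  have "\<exists>a\<in>valring K v. L.acq t N x = proj L v N a" if x: "x \<in> K" for N x
  proof (cases "x = 0")
    case True
    have "L.acq t N x = proj L v N 0" using True by (simp add: L.acq_def)
    moreover have "(0::'a) \<in> valring K v" by (simp add: valring_def)
    ultimately show ?thesis by blast
  next
    case False
    have xL: "x \<in> L" using x KL by auto
    obtain m where m: "v x = v s * m" using K.unif_dvd[OF s x False] by (auto simp: dvd_def)
    then have "v x = (int e * m) * v t" using vs by simp
    then have "v x div v t = int e * m" using t0 by simp
    then have "L.wq t x = x / (t ^ e) powi m"
      by (simp add: L.wq_def power_int_mult)
    then have "L.wq t x \<in> K" using te x by (simp add: e_def)
    moreover have "L.wq t x \<in> unitsO L v" using L.wq_unit[OF t xL False] .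
    ultimately have "L.wq t x \<in> valring K v" by (simp add: unitsO_def valring_def)
    then show ?thesis using False by (auto simp: L.acq_def)
  qed
  then show ?thesis using L.acq_compat[OF t] by blast
qed

lemma dir1:
  fixes K L :: "'a::field_char_0 set" and v :: "'a \<Rightarrow> int"
  assumes pK: "padic_field K v" and pL: "padic_field L v" and KL: "K \<subseteq> L"
    and tr: "totally_ramified K L v" and ac: "compatible_ac L v ac"
    and res: "\<forall>N\<ge>1. \<forall>x\<in>K. \<exists>a\<in>valring K v. ac N x = proj L v N a"
  shows "\<exists>t. uniformizer L v t \<and> t ^ degree K L \<in> K"
proof -
  interpret K: vfield K v using padic_vfield[OF pK] .
  interpret L: vfield L v using padic_vfield[OF pL] .
  obtain q :: nat where q: "q \<ge> 1" "0 < v (of_nat q)"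
    using L.exists_q pL by (auto simp: padic_field_def)
  define Q where "Q k = q ^ k" for k
  have Q1: "Q k \<ge> 1" for k using q by (simp add: Q_def)
  have vQ: "int k \<le> v (of_nat (Q k))" for k
  proof -
    have e1: "v (of_nat (Q k)) = int k * v (of_nat q)"
      using L.v_power[of "of_nat q" k] q by (simp add: Q_def)
    have "int k * 1 \<le> int k * v (of_nat q)" by (rule mult_left_mono) (use q in auto)
    then show ?thesis using e1 by simp
  qed
  have QQ: "Q k * q ^ (l - k) = Q l" if "k \<le> l" for k l
    using that by (simp add: Q_def flip: power_add)
  have q1: "q ^ n \<ge> 1" for n using q by simp
  obtain t where t: "uniformizer L v t" using L.exists_unif by blast
  obtain s where s: "uniformizer K v s" using K.exists_unif by blast
  define e where "e = degree K L"
  have vs: "v s = int e * v t" using tr s t by (simp add: totally_ramified_def e_def)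
  have t0: "t \<in> L" "t \<noteq> 0" "v t > 0" using t by (auto simp: uniformizer_def)
  have s0: "s \<in> K" "s \<noteq> 0" "v s > 0" using s by (auto simp: uniformizer_def)
  have sL: "s \<in> L" using s0 KL by auto
  define u where "u = s / t ^ e"
  have tpow: "t ^ e \<in> L" "t ^ e \<noteq> 0" using t0 by auto
  have uL: "u \<in> L" "u \<noteq> 0" using sL tpow s0 by (auto simp: u_def)
  have "v u = v s - int e * v t" using L.v_divide[OF sL tpow(1) s0(2) tpow(2)] L.v_power[OF t0(1,2)]
    by (simp add: u_def)
  then have uU: "u \<in> unitsO L v" using uL vs by (simp add: unitsO_def)
  have uV: "u \<in> valring L v" using L.unitsO_valring[OF uU] .
  have su: "s = u * t ^ e" using tpow by (simp add: u_def)
  have acm: "ac_map L v (Q k) (ac (Q k))" for k using ac Q1 unfolding compatible_ac_def by blast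
  have comp: "\<And>N M x a. N \<ge> 1 \<Longrightarrow> M \<ge> 1 \<Longrightarrow> x \<in> L \<Longrightarrow> a \<in> valring L v \<Longrightarrow>
        ac (N * M) x = proj L v (N * M) a \<Longrightarrow> ac N x = proj L v N a"
    using ac unfolding compatible_ac_def by blast
  have valKL: "valring K v \<subseteq> valring L v" using KL by (auto simp: valring_def)
  have "\<forall>k. \<exists>a. a \<in> valring L v \<and> ac (Q k) t = proj L v (Q k) a \<and>
          (\<exists>b\<in>valring L v. proj L v (Q k) (a * b) = proj L v (Q k) 1)"
  proof
    fix k
    show "\<exists>a. a \<in> valring L v \<and> ac (Q k) t = proj L v (Q k) a \<and>
          (\<exists>b\<in>valring L v. proj L v (Q k) (a * b) = proj L v (Q k) 1)"
      using L.ac_nonzero[OF acm t0(1,2)] by blast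
  qed
  then obtain A where A: "\<And>k. A k \<in> valring L v" "\<And>k. ac (Q k) t = proj L v (Q k) (A k)"
    "\<And>k. \<exists>b\<in>valring L v. proj L v (Q k) (A k * b) = proj L v (Q k) 1"
    by metis
  have "\<forall>k. \<exists>c. c \<in> valring K v \<and> ac (Q k) s = proj L v (Q k) c"
  proof
    fix k
    have "\<exists>a\<in>valring K v. ac (Q k) s = proj L v (Q k) a" using res Q1[of k] s0(1) by blast
    then show "\<exists>c. c \<in> valring K v \<and> ac (Q k) s = proj L v (Q k) c" by blast
  qed
  then obtain C where C: "\<And>k. C k \<in> valring K v" "\<And>k. ac (Q k) s = proj L v (Q k) (C k)"
    by metis
  have CL: "C k \<in> valring L v" for k using C valKL by auto
  have CK: "C k \<in> K" for k using C by (simp add: valring_def)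
  have cauchy: "L.sm (int k) (Z k - Z l)"
    if Z: "\<And>k. Z k \<in> valring L v" "\<And>k. ac (Q k) x = proj L v (Q k) (Z k)" and x: "x \<in> L"
      and kl: "k \<le> l" for Z x k l
  proof -
    have "ac (Q k * q ^ (l - k)) x = proj L v (Q k * q ^ (l - k)) (Z l)" using Z QQ[OF kl] by simp
    then have "ac (Q k) x = proj L v (Q k) (Z l)" using comp[OF Q1 q1 x Z(1)] by blast
    then have "L.sm (v (of_nat (Q k))) (Z k - Z l)" using Z L.proj_eq[OF Q1 Z(1)[of k] Z(1)[of l]] by simp
    then show ?thesis using L.sm_mono vQ by blast
  qed
  have "\<exists>a\<in>L. \<forall>k. L.sm (int k) (A k - a)"
    by (rule L.complete_lim) (use pL A cauchy[OF A(1,2) t0(1)] in \<open>auto simp: padic_field_def valring_def\<close>)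
  then obtain a where a: "a \<in> L" "\<And>k. L.sm (int k) (A k - a)" by blast
  have "\<exists>c\<in>K. \<forall>k. K.sm (int k) (C k - c)"
  proof (rule K.complete_lim)
    show "complete_wrt K v" using pK by (simp add: padic_field_def)
    show "C k \<in> K" for k using CK .
    show "K.sm (int k) (C k - C l)" if "k \<le> l" for k l
      using cauchy[OF CL C(2) sL that] CK by (simp add: K.sm_def L.sm_def)
  qed
  then obtain c where c: "c \<in> K" "\<And>k. K.sm (int k) (C k - c)" by blast
  have cL: "L.sm (int k) (C k - c)" for k using c(2)[of k] KL by (auto simp: K.sm_def L.sm_def)
  have aV: "a \<in> valring L v"
  proof -
    have "L.sm (-1) (A 0 - (A 0 - a))"
      using L.sm_diff[OF _ L.sm_mono[OF _ a(2)[of 0]], of "-1" "A 0"] A(1)[of 0] by (simp add: L.valring_sm)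
    then show ?thesis by (simp add: L.valring_sm)
  qed
  have rel: "L.sm (int k) (C k - u * A k ^ e)" for k
  proof -
    have "ac (Q k) (t ^ e) = proj L v (Q k) (A k ^ e)" using L.ac_pow[OF acm t0(1,2) A(1) A(2)] .
    moreover have "ac (Q k) u = proj L v (Q k) u" using L.ac_unit[OF acm uU] .
    ultimately have "ac (Q k) (u * t ^ e) = proj L v (Q k) (u * A k ^ e)"
      using L.ac_mult[OF acm uL(1) tpow(1) uL(2) tpow(2) uV] A(1) by simp
    then have "proj L v (Q k) (C k) = proj L v (Q k) (u * A k ^ e)" using C(2) su by simp
    then have "L.sm (v (of_nat (Q k))) (C k - u * A k ^ e)"
      using L.proj_eq[OF Q1 CL] uV A(1) by simp
    then show ?thesis using L.sm_mono vQ by blast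
  qed
  have "L.sm (int k) (c - u * a ^ e)" for k
  proof -
    have 1: "L.sm (int k) (c - C k)" using L.sm_swap[OF cL] .
    have 2: "L.sm (int k) (A k ^ e - a ^ e)" using L.sm_power[OF A(1) aV a(2)] .
    have eq: "(c - C k) + (C k - u * A k ^ e) + u * (A k ^ e - a ^ e) = c - u * a ^ e"
      by (simp add: algebra_simps)
    from L.sm_add[OF L.sm_add[OF 1 rel] L.sm_mult[OF uV 2]] show ?thesis unfolding eq .
  qed
  then have "c - u * a ^ e = 0" by (rule L.sm_all_zero)
  then have cua: "c = u * a ^ e" by simp
  obtain b where b: "b \<in> valring L v" "proj L v (Q 0) (A 0 * b) = proj L v (Q 0) 1" using A(3) by blast
  have "L.sm (v (of_nat (Q 0))) (A 0 * b - 1)" using b L.proj_eq[OF Q1] A(1) by simp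
  then have s1: "L.sm 0 (A 0 * b - 1)" by (simp add: Q_def)
  have s2: "L.sm 0 (a - A 0)" using L.sm_swap[OF a(2)[of 0]] by simp
  have eq2: "b * (a - A 0) + (A 0 * b - 1) = a * b - 1" by (simp add: algebra_simps)
  from L.sm_add[OF L.sm_mult[OF b(1) s2] s1] have "L.sm 0 (a * b - 1)" unfolding eq2 .
  then have ab: "a * b \<noteq> 0" "v (a * b) = 0" using L.sm_unit[of "a * b"] by auto
  then have a0: "a \<noteq> 0" and b0: "b \<noteq> 0" by auto
  have bL: "b \<in> L" using b by (simp add: valring_def)
  have "v a + v b = 0" using ab L.v_mult[OF a(1) bL a0 b0] by simp
  moreover have "v a \<ge> 0" "v b \<ge> 0" using aV b(1) a0 b0 by (auto simp: valring_def)
  ultimately have va: "v a = 0" by simp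
  define \<tau> where "\<tau> = t / a"
  have "v \<tau> = v t" using L.v_divide[OF t0(1) a(1) t0(2) a0] va by (simp add: \<tau>_def)
  then have "uniformizer L v \<tau>" using t t0 a a0 by (auto simp: uniformizer_def \<tau>_def)
  moreover have "\<tau> ^ e = s / c"
    using cua su uL a0 by (simp add: \<tau>_def power_divide)
  moreover have "s / c \<in> K" using s0 c by simp
  ultimately show ?thesis unfolding e_def by metis
qed

theorem lemma3p2:
  fixes K L :: "'a::field_char_0 set" and v :: "'a \<Rightarrow> int"
  assumes "padic_field K v" and "padic_field L v" and "K \<subseteq> L"
    and "finite_ext K L" and "totally_ramified K L v"
  shows "(\<exists>ac. compatible_ac L v ac \<and>
            (\<forall>N\<ge>1. \<forall>x\<in>K. \<exists>a\<in>valring K v. ac N x = proj L v N a))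
         \<longleftrightarrow> (\<exists>t. uniformizer L v t \<and> t ^ degree K L \<in> K)"
  using dir1[OF assms(1,2,3,5)] dir2[OF assms(1,2,3,5)] by blast

end
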